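(* Let $N \ge 2$, let $0 \le z_1 < z_2 < \dots < z_N < 1$, let $\alpha_1, \dots, \alpha_N > 0$ with $\sum_{i=1}^N \alpha_i = 1$, and let $\mu = \sum_{i=1}^N \alpha_i \delta_{z_i}$ on $\mathcal I = [0,1]$. Then the $\mu$-energy form $\mathcal E(f,g) = \langle \nabla^{\mu} f, \nabla^{\mu} g\rangle_\mu$, defined for $f,g \in \mathscr D^1_\mu$, is a Dirichlet form on $L^2_\mu$ (i.e. it is a symmetric, non-negative, closed bilinear form with the Markov property: for every $f$ in its domain, $\hat f = \min(\max(f,0),1)$ is in the domain and $\mathcal E(\hat f,\hat f) \le \mathcal E(f,f)$).
   Context: $\delta_z$ denotes the Dirac measure at $z$. $L^2_\mu$ is the space of ($\mu$-a.e. equivalence classes of) real-valued square-integrable functions on $[0,1]$ with inner product $\langle f,g\rangle_\mu = \sum_{i=1}^N \alpha_i f(z_i) g(z_i)$. The set of $\mu$-differentiable functions with periodic boundary conditions is $\mathscr D^1_\mu = \{ f : [0,1]\to\mathbb R \text{ square-integrable w.r.t. } \mu : \exists f' \in L^2_\mu \text{ with } f(0)=f(1) \text{ and } f(x) = f(0) + \int \mathbf 1_{[0,x)} f' \, d\mu \text{ for all } x \in [0,1]\}$, where $[0,0)=\emptyset$; $f'$ is unique in $L^2_\mu$ and the $\mu$-derivative is $\nabla^\mu f := f'$. Equivalently $f(x) = f(0) + \sum_{i: z_i < x} \alpha_i \nabla^\mu f(z_i)$. Every class in $L^2_\mu$ has a representative in $\mathscr D^1_\mu$, and $\mathscr D^1_\mu$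 is identified with $L^2_\mu$ in this way. Explicitly, $\nabla^\mu f(z_n) = (f(z_{n+1}) - f(z_n))/\alpha_n$ for $n \in \{1,\dots,N-1\}$ and $\nabla^\mu f(z_N) = (f(z_1) - f(z_N))/\alpha_N$. *)

theory Defs
  imports Complex_Main
begin

text \<open>Atoms are indexed 0-based: z 0 < ... < z (N-1), weights alpha 0, ..., alpha (N-1).
  Functions on [0,1] are modelled as real => real (values outside [0,1] are irrelevant).
  Since mu has finitely many atoms, every function is square-integrable w.r.t. mu.\<close>

definition mu_inner :: "nat \<Rightarrow> (nat \<Rightarrow> real) \<Rightarrow> (nat \<Rightarrow> real) \<Rightarrow> (real \<Rightarrow> real) \<Rightarrow> (real \<Rightarrow> real) \<Rightarrow> real" where
  "mu_inner N \<alpha> z f g = (\<Sum>i<N. \<alpha> i * f (z i) * g (z i))"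

definition is_mu_deriv :: "nat \<Rightarrow> (nat \<Rightarrow> real) \<Rightarrow> (nat \<Rightarrow> real) \<Rightarrow> (real \<Rightarrow> real) \<Rightarrow> (real \<Rightarrow> real) \<Rightarrow> bool" where
  "is_mu_deriv N \<alpha> z f f' \<longleftrightarrow> f 0 = f 1 \<and>
     (\<forall>x\<in>{0..1}. f x = f 0 + (\<Sum>i\<in>{i. i < N \<and> z i < x}. \<alpha> i * f' (z i)))"

definition mu_D1 :: "nat \<Rightarrow> (nat \<Rightarrow> real) \<Rightarrow> (nat \<Rightarrow> real) \<Rightarrow> (real \<Rightarrow> real) set" where
  "mu_D1 N \<alpha> z = {f. \<exists>f'. is_mu_deriv N \<alpha> z f f'}"

definition mu_grad :: "nat \<Rightarrow> (nat \<Rightarrow> real) \<Rightarrow> (nat \<Rightarrow> real) \<Rightarrow> (real \<Rightarrow> real) \<Rightarrow> (real \<Rightarrow> real)" where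
  "mu_grad N \<alpha> z f = (SOME f'. is_mu_deriv N \<alpha> z f f')"

definition mu_energy :: "nat \<Rightarrow> (nat \<Rightarrow> real) \<Rightarrow> (nat \<Rightarrow> real) \<Rightarrow> (real \<Rightarrow> real) \<Rightarrow> (real \<Rightarrow> real) \<Rightarrow> real" where
  "mu_energy N \<alpha> z f g = mu_inner N \<alpha> z (mu_grad N \<alpha> z f) (mu_grad N \<alpha> z g)"

text \<open>Dirichlet form on a (pre-)Hilbert space of functions H with semi-inner product ip
  (elements identified when ip (f-g) (f-g) = 0), with domain D and form E.\<close>
definition dirichlet_form ::
  "(real \<Rightarrow> real) set \<Rightarrow> ((real \<Rightarrow> real) \<Rightarrow> (real \<Rightarrow> real) \<Rightarrow> real) \<Rightarrow>
   (real \<Rightarrow> real) set \<Rightarrow> ((real \<Rightarrow> real) \<Rightarrow> (real \<Rightarrow> real) \<Rightarrow> real) \<Rightarrow> bool" where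
  "dirichlet_form H ip D E \<longleftrightarrow>
     \<comment> \<open>D is a linear subspace of H\<close>
     D \<subseteq> H \<and> (\<lambda>x. 0) \<in> D \<and>
     (\<forall>f\<in>D. \<forall>g\<in>D. (\<lambda>x. f x + g x) \<in> D) \<and>
     (\<forall>c. \<forall>f\<in>D. (\<lambda>x. c * f x) \<in> D) \<and>
     \<comment> \<open>D is dense in H\<close>
     (\<forall>f\<in>H. \<forall>\<epsilon>>0. \<exists>g\<in>D. ip (\<lambda>x. f x - g x) (\<lambda>x. f x - g x) < \<epsilon>) \<and>
     \<comment> \<open>E is well defined on equivalence classes\<close>
     (\<forall>f\<in>D. \<forall>g\<in>D. \<forall>h\<in>D. ip (\<lambda>x. f x - g x) (\<lambda>x. f x - g x) = 0 \<longrightarrow> E f h = E g h) \<and>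
     \<comment> \<open>bilinear\<close>
     (\<forall>f\<in>D. \<forall>g\<in>D. \<forall>h\<in>D. E (\<lambda>x. f x + g x) h = E f h + E g h) \<and>
     (\<forall>c. \<forall>f\<in>D. \<forall>g\<in>D. E (\<lambda>x. c * f x) g = c * E f g) \<and>
     \<comment> \<open>symmetric\<close>
     (\<forall>f\<in>D. \<forall>g\<in>D. E f g = E g f) \<and>
     \<comment> \<open>non-negative\<close>
     (\<forall>f\<in>D. 0 \<le> E f f) \<and>
     \<comment> \<open>closed: D complete w.r.t. the E_1 norm\<close>
     (\<forall>u :: nat \<Rightarrow> real \<Rightarrow> real. (\<forall>n. u n \<in> D) \<longrightarrow>
        (\<forall>\<epsilon>>0. \<exists>M. \<forall>n\<ge>M. \<forall>m\<ge>M.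
            E (\<lambda>x. u n x - u m x) (\<lambda>x. u n x - u m x)
          + ip (\<lambda>x. u n x - u m x) (\<lambda>x. u n x - u m x) < \<epsilon>) \<longrightarrow>
        (\<exists>v\<in>D. (\<lambda>n. E (\<lambda>x. u n x - v x) (\<lambda>x. u n x - v x)
                    + ip (\<lambda>x. u n x - v x) (\<lambda>x. u n x - v x)) \<longlonglongrightarrow> 0)) \<and>
     \<comment> \<open>Markov property\<close>
     (\<forall>f\<in>D. (\<lambda>x. min (max (f x) 0) 1) \<in> D \<and>
        E (\<lambda>x. min (max (f x) 0) 1) (\<lambda>x. min (max (f x) 0) 1) \<le> E f f)"

end

theory Submission
  imports Defs
begin

locale dsetup =
  fixes N :: nat and z \<alpha> :: "nat \<Rightarrow> real"
  assumes N2: "N \<ge> 2" and z0: "0 \<le> z 0" and zN: "z (N - 1) < 1"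
    and zmono: "\<And>i j. i < j \<Longrightarrow> j < N \<Longrightarrow> z i < z j"
    and apos: "\<And>i. i < N \<Longrightarrow> \<alpha> i > 0"
begin

definition S where "S x = {i. i < N \<and> z i < x}"
definition nxt where "nxt k = (if Suc k < N then Suc k else 0)"
definition dg where "dg f k = (f (z (nxt k)) - f (z k)) / \<alpha> k"
definition stepf where "stepf g \<longleftrightarrow> g 0 = g 1 \<and> (\<forall>x\<in>{0..1}. \<forall>y\<in>{0..1}. S x = S y \<longrightarrow> g x = g y)"
definition idx where "idx x = (if card (S x) < N then card (S x) else 0)"
definition stp where "stp c x = c (idx x)"

lemma zle: "i \<le> j \<Longrightarrow> j < N \<Longrightarrow> z i \<le> z j"
  using zmono by (cases "i = j") (auto simp: le_less)

lemma z01: "k < N \<Longrightarrow> z k \<in> {0..1}"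
proof -
  assume k: "k < N"
  have "z 0 \<le> z k" using zle k by simp
  moreover have "z k \<le> z (N - 1)" using zle k by simp
  ultimately show ?thesis using z0 zN by auto
qed

lemma nxt_lt: "k < N \<Longrightarrow> nxt k < N"
  using N2 by (auto simp: nxt_def)

lemma S_prefix: "\<exists>m\<le>N. S x = {..<m} \<and> (m < N \<longrightarrow> x \<le> z m)"
proof (cases "\<exists>i<N. x \<le> z i")
  case True
  define m where "m = (LEAST i. i < N \<and> x \<le> z i)"
  have m: "m < N \<and> x \<le> z m" unfolding m_def by (rule LeastI_ex) (use True in auto)
  have "S x = {..<m}"
  proof (intro set_eqI iffI)
    fix i assume "i \<in> S x"
    then have i: "i < N" "z i < x" by (auto simp: S_def)
    show "i \<in> {..<m}"
    proof (rule ccontr)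
      assume "i \<notin> {..<m}"
      then have "m \<le> i" by auto
      then have "z m \<le> z i" using zle i by simp
      then show False using m i by simp
    qed
  next
    fix i assume "i \<in> {..<m}"
    then have "i < m" by simp
    then have "\<not> (i < N \<and> x \<le> z i)" unfolding m_def by (rule not_less_Least)
    then show "i \<in> S x" using \<open>i < m\<close> m by (auto simp: S_def)
  qed
  then show ?thesis using m by (intro exI[of _ m]) auto
next
  case False
  then have "S x = {..<N}" by (auto simp: S_def not_le)
  then show ?thesis by auto
qed

lemma S_z: "k < N \<Longrightarrow> S (z k) = {..<k}"
proof (intro set_eqI iffI)
  fix i assume k: "k < N" and "i \<in> S (z k)"
  then have i: "i < N" "z i < z k" by (auto simp: S_def)
  show "i \<in> {..<k}"
  proof (rule ccontr)
    assume "i \<notin> {..<k}"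
    then have "k \<le> i" by auto
    then show False using zle[of k i] i by simp
  qed
next
  fix i assume k: "k < N" and "i \<in> {..<k}"
  then show "i \<in> S (z k)" using zmono by (auto simp: S_def)
qed

lemma S_1: "S 1 = {..<N}"
proof -
  have "z i < 1" if "i < N" for i
  proof -
    have "i \<le> N - 1" using that by simp
    then have "z i \<le> z (N - 1)" using zle N2 by simp
    then show ?thesis using zN by simp
  qed
  then show ?thesis by (auto simp: S_def)
qed

lemma S_0: "S 0 = {}"
proof -
  have "\<And>i. i < N \<Longrightarrow> 0 \<le> z i" using z01 by auto
  then show ?thesis by (force simp: S_def)
qed

lemma deriv_unique:
  assumes d: "is_mu_deriv N \<alpha> z f f'" and k: "k < N"
  shows "f' (z k) = dg f k"
proof -
  have fx: "\<And>x. x \<in> {0..1} \<Longrightarrow> f x = f 0 + (\<Sum>i\<in>S x. \<alpha> i * f' (z i))"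
    using d unfolding is_mu_deriv_def S_def by blast
  have f01: "f 0 = f 1" using d unfolding is_mu_deriv_def by blast
  have fk: "f (z k) = f 0 + (\<Sum>i<k. \<alpha> i * f' (z i))" if k: "k < N" for k
  proof -
    have "f (z k) = f 0 + (\<Sum>i\<in>S (z k). \<alpha> i * f' (z i))" by (rule fx[OF z01[OF k]])
    then show ?thesis by (simp only: S_z[OF k])
  qed
  have "\<alpha> k * f' (z k) = f (z (nxt k)) - f (z k)"
  proof (cases "Suc k < N")
    case True
    have "nxt k = Suc k" using True by (simp add: nxt_def)
    then show ?thesis using fk[OF True] fk[OF k] by simp
  next
    case False
    then have Nk: "N = Suc k" using k by simp
    have nk: "nxt k = 0" using False by (simp add: nxt_def)
    have "f 1 = f 0 + (\<Sum>i\<in>S 1. \<alpha> i * f' (z i))" using fx[of 1] by simp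
    then have "f 1 = f 0 + (\<Sum>i<N. \<alpha> i * f' (z i))" by (simp only: S_1)
    then have A: "f 1 = f 0 + (\<Sum>i<Suc k. \<alpha> i * f' (z i))" by (simp only: Nk)
    have B: "f (z 0) = f 0" using fk[of 0] k by simp
    have C: "f (z k) = f 0 + (\<Sum>i<k. \<alpha> i * f' (z i))" by (rule fk[OF k])
    have A2: "f 1 = f 0 + (\<Sum>i<k. \<alpha> i * f' (z i)) + \<alpha> k * f' (z k)" using A by simp
    from A2 C f01 have "\<alpha> k * f' (z k) = f 0 - f (z k)" by linarith
    then show ?thesis using B nk by simp
  qed
  then show ?thesis using apos[OF k] unfolding dg_def by (simp add: field_simps)
qed

lemma D_step: "f \<in> mu_D1 N \<alpha> z \<Longrightarrow> stepf f"
proof -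
  assume "f \<in> mu_D1 N \<alpha> z"
  then obtain f' where d: "is_mu_deriv N \<alpha> z f f'" by (auto simp: mu_D1_def)
  have fx: "\<And>x. x \<in> {0..1} \<Longrightarrow> f x = f 0 + (\<Sum>i\<in>S x. \<alpha> i * f' (z i))"
    using d unfolding is_mu_deriv_def S_def by blast
  have "f x = f y" if "x \<in> {0..1}" "y \<in> {0..1}" "S x = S y" for x y
    using fx[OF that(1)] fx[OF that(2)] that(3) by simp
  moreover have "f 0 = f 1" using d unfolding is_mu_deriv_def by blast
  ultimately show ?thesis unfolding stepf_def by blast
qed

lemma z_inj: "i < N \<Longrightarrow> j < N \<Longrightarrow> z i = z j \<Longrightarrow> i = j"
  using zmono by (metis less_irrefl nat_neq_iff)

lemma step_D: assumes g: "stepf g" shows "g \<in> mu_D1 N \<alpha> z"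
proof -
  define f' where "f' y = dg g (SOME k. k < N \<and> z k = y)" for y
  have f'z: "f' (z i) = dg g i" if "i < N" for i
  proof -
    have "(SOME k. k < N \<and> z k = z i) = i"
      by (rule some_equality) (use that z_inj in auto)
    then show ?thesis by (simp add: f'_def)
  qed
  have tel: "\<alpha> i * dg g i = g (z (nxt i)) - g (z i)" if "i < N" for i
    using apos[OF that] by (simp add: dg_def)
  have gS: "g x = g y" if "x \<in> {0..1}" "y \<in> {0..1}" "S x = S y" for x y
    using g that unfolding stepf_def by blast
  have g01: "g 0 = g 1" using g unfolding stepf_def by blast
  have g0: "g (z 0) = g 0"
    using N2 S_z[of 0] S_0 z01[of 0] by (intro gS) auto
  have main: "g x = g 0 + (\<Sum>i\<in>S x. \<alpha> i * f' (z i))" if x: "x \<in> {0..1}" for x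
  proof -
    obtain m where m: "m \<le> N" "S x = {..<m}" "m < N \<longrightarrow> x \<le> z m" using S_prefix by blast
    have "(\<Sum>i\<in>S x. \<alpha> i * f' (z i)) = (\<Sum>i<m. g (z (nxt i)) - g (z i))"
      using m f'z tel by (auto intro!: sum.cong)
    also have "\<dots> = g x - g 0"
    proof (cases "m < N")
      case True
      have "(\<Sum>i<m. g (z (nxt i)) - g (z i)) = (\<Sum>i<m. g (z (Suc i)) - g (z i))"
        using True by (auto intro!: sum.cong simp: nxt_def)
      also have "\<dots> = g (z m) - g (z 0)" by (rule sum_lessThan_telescope)
      also have "g (z m) = g x" using True m S_z[of m] z01[of m] x by (intro gS) auto
      finally show ?thesis using g0 by simp
    next
      case False
      then have mN: "m = N" using m by simp
      obtain K where K: "N = Suc K" using N2 by (cases N) auto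
      have a: "(\<Sum>i<K. g (z (nxt i)) - g (z i)) = (\<Sum>i<K. g (z (Suc i)) - g (z i))"
      proof (rule sum.cong)
        fix i assume "i \<in> {..<K}"
        then have "nxt i = Suc i" unfolding nxt_def using K by simp
        then show "g (z (nxt i)) - g (z i) = g (z (Suc i)) - g (z i)" by simp
      qed simp
      have b: "nxt K = 0" unfolding nxt_def using K by simp
      have "(\<Sum>i<m. g (z (nxt i)) - g (z i)) = (\<Sum>i<K. g (z (Suc i)) - g (z i)) + (g (z 0) - g (z K))"
        using mN K a b by simp
      also have "\<dots> = 0" using sum_lessThan_telescope[of "\<lambda>i. g (z i)" K] by simp
      finally have "(\<Sum>i<m. g (z (nxt i)) - g (z i)) = 0" .
      moreover have "g x = g 0" using m mN S_1 x g01 gS[of x 1] by auto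
      ultimately show ?thesis by simp
    qed
    finally show ?thesis by simp
  qed
  have "is_mu_deriv N \<alpha> z g f'"
    unfolding is_mu_deriv_def using g main unfolding stepf_def S_def by blast
  then show ?thesis by (auto simp: mu_D1_def)
qed

lemma step_comp2: assumes "stepf f" "stepf g" shows "stepf (\<lambda>x. h (f x) (g x))"
proof -
  have a: "f 0 = f 1" "g 0 = g 1" using assms unfolding stepf_def by blast+
  have b: "\<forall>x\<in>{0..1}. \<forall>y\<in>{0..1}. S x = S y \<longrightarrow> h (f x) (g x) = h (f y) (g y)"
    using assms unfolding stepf_def by metis
  show ?thesis unfolding stepf_def using a b by metis
qed

lemma D_eq: "mu_D1 N \<alpha> z = {f. stepf f}"
  using D_step step_D by blast

lemma grad: "f \<in> mu_D1 N \<alpha> z \<Longrightarrow> k < N \<Longrightarrow> mu_grad N \<alpha> z f (z k) = dg f k"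
proof -
  assume "f \<in> mu_D1 N \<alpha> z" "k < N"
  then have "\<exists>f'. is_mu_deriv N \<alpha> z f f'" by (auto simp: mu_D1_def)
  then have "is_mu_deriv N \<alpha> z f (mu_grad N \<alpha> z f)" unfolding mu_grad_def by (rule someI_ex)
  then show ?thesis using deriv_unique \<open>k < N\<close> by blast
qed

lemma energy: "f \<in> mu_D1 N \<alpha> z \<Longrightarrow> g \<in> mu_D1 N \<alpha> z \<Longrightarrow>
   mu_energy N \<alpha> z f g = (\<Sum>k<N. \<alpha> k * dg f k * dg g k)"
  unfolding mu_energy_def mu_inner_def by (auto intro!: sum.cong simp: grad)

lemma stp_D: "stp c \<in> mu_D1 N \<alpha> z"
proof -
  have "stp c 0 = c 0" using S_0 N2 by (simp add: stp_def idx_def)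
  moreover have "stp c 1 = c 0" using S_1 by (simp add: stp_def idx_def)
  ultimately have "stepf (stp c)" by (auto simp: stepf_def stp_def idx_def)
  then show ?thesis using D_eq by simp
qed

lemma stp_z: "k < N \<Longrightarrow> stp c (z k) = c k"
  using S_z by (simp add: stp_def idx_def)

end

lemma sq_mono_abs: "\<bar>a\<bar> \<le> \<bar>b::real\<bar> \<Longrightarrow> a * a \<le> b * b"
  by (metis abs_ge_zero abs_mult_self_eq mult_mono)

lemma clamp_lip: "\<bar>min (max a 0) 1 - min (max b 0) 1\<bar> \<le> \<bar>a - (b::real)\<bar>"
  by (auto simp: min_def max_def abs_if)

theorem theorem2p1:
  fixes N :: nat and z \<alpha> :: "nat \<Rightarrow> real"
  assumes "N \<ge> 2"
    and "0 \<le> z 0" and "z (N - 1) < 1"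
    and "\<And>i j. i < j \<Longrightarrow> j < N \<Longrightarrow> z i < z j"
    and "\<And>i. i < N \<Longrightarrow> \<alpha> i > 0"
    and "(\<Sum>i<N. \<alpha> i) = 1"
  shows "dirichlet_form UNIV (mu_inner N \<alpha> z) (mu_D1 N \<alpha> z) (mu_energy N \<alpha> z)"
proof -
  interpret dsetup N z \<alpha> using assms by unfold_locales auto
  let ?D = "mu_D1 N \<alpha> z" and ?E = "mu_energy N \<alpha> z" and ?ip = "mu_inner N \<alpha> z"
  have inD: "f \<in> ?D \<longleftrightarrow> stepf f" for f using D_eq by simp
  have c1: "(\<lambda>x. 0) \<in> ?D" by (simp add: inD stepf_def)
  have c2: "\<forall>f\<in>?D. \<forall>g\<in>?D. (\<lambda>x. f x + g x) \<in> ?D"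
    using inD step_comp2[where h="\<lambda>a b. a + b"] by blast
  have c3: "\<forall>c. \<forall>f\<in>?D. (\<lambda>x. c * f x) \<in> ?D"
    using inD step_comp2[where h="\<lambda>a b. c * a" for c] by blast
  have cdiff: "(\<lambda>x. f x - g x) \<in> ?D" if "f \<in> ?D" "g \<in> ?D" for f g
    using that using inD step_comp2[where h="\<lambda>a b. a - b"] by blast
  have c4: "\<forall>f\<in>UNIV. \<forall>\<epsilon>>0. \<exists>g\<in>?D. ?ip (\<lambda>x. f x - g x) (\<lambda>x. f x - g x) < \<epsilon>"
  proof (intro ballI allI impI)
    fix f :: "real \<Rightarrow> real" and \<epsilon> :: real assume "\<epsilon> > 0"
    let ?g = "stp (\<lambda>k. f (z k))"
    have "?ip (\<lambda>x. f x - ?g x) (\<lambda>x. f x - ?g x) = 0"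
      unfolding mu_inner_def by (auto intro!: sum.neutral simp: stp_z)
    then show "\<exists>g\<in>?D. ?ip (\<lambda>x. f x - g x) (\<lambda>x. f x - g x) < \<epsilon>"
      using stp_D \<open>\<epsilon> > 0\<close> by (intro bexI[of _ ?g]) auto
  qed
  have ip0: "\<forall>i<N. h (z i) = 0" if "?ip h h = 0" for h
  proof -
    have nn: "\<forall>i\<in>{..<N}. 0 \<le> \<alpha> i * h (z i) * h (z i)"
      using apos by (simp add: mult.assoc less_imp_le)
    have "\<forall>i\<in>{..<N}. \<alpha> i * h (z i) * h (z i) = 0"
      using that sum_nonneg_eq_0_iff[OF finite_lessThan, where f="\<lambda>i. \<alpha> i * h (z i) * h (z i)"] nn
      unfolding mu_inner_def by blast
    then show ?thesis using apos by (metis lessThan_iff less_irrefl mult_eq_0_iff)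
  qed
  have c5: "\<forall>f\<in>?D. \<forall>g\<in>?D. \<forall>h\<in>?D. ?ip (\<lambda>x. f x - g x) (\<lambda>x. f x - g x) = 0 \<longrightarrow> ?E f h = ?E g h"
  proof (intro ballI impI)
    fix f g h assume D: "f \<in> ?D" "g \<in> ?D" "h \<in> ?D" and z: "?ip (\<lambda>x. f x - g x) (\<lambda>x. f x - g x) = 0"
    have "\<forall>i<N. f (z i) = g (z i)" using ip0[OF z] by simp
    then have "\<And>k. k < N \<Longrightarrow> dg f k = dg g k" using nxt_lt by (simp add: dg_def)
    then show "?E f h = ?E g h" using D by (simp add: energy)
  qed
  have c6: "\<forall>f\<in>?D. \<forall>g\<in>?D. \<forall>h\<in>?D. ?E (\<lambda>x. f x + g x) h = ?E f h + ?E g h"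
  proof (intro ballI)
    fix f g h assume D: "f \<in> ?D" "g \<in> ?D" "h \<in> ?D"
    have "dg (\<lambda>x. f x + g x) k = dg f k + dg g k" for k by (simp add: dg_def diff_divide_distrib add_divide_distrib)
    then show "?E (\<lambda>x. f x + g x) h = ?E f h + ?E g h"
      using D c2 by (simp add: energy ring_distribs sum.distrib)
  qed
  have c7: "\<forall>c. \<forall>f\<in>?D. \<forall>g\<in>?D. ?E (\<lambda>x. c * f x) g = c * ?E f g"
  proof (intro allI ballI)
    fix c f g assume D: "f \<in> ?D" "g \<in> ?D"
    have "dg (\<lambda>x. c * f x) k = c * dg f k" for k by (simp add: dg_def right_diff_distrib)
    then show "?E (\<lambda>x. c * f x) g = c * ?E f g"
      using D c3 by (simp add: energy sum_distrib_left mult_ac)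
  qed
  have c8: "\<forall>f\<in>?D. \<forall>g\<in>?D. ?E f g = ?E g f"
    by (auto simp: energy mult_ac)
  have Enn: "0 \<le> ?E f f" if "f \<in> ?D" for f
  proof -
    have "\<forall>k\<in>{..<N}. 0 \<le> \<alpha> k * dg f k * dg f k"
      using apos by (simp add: mult.assoc less_imp_le)
    then show ?thesis using that by (simp add: energy) (rule sum_nonneg, blast)
  qed
  have ipnn: "0 \<le> ?ip h h" for h
  proof -
    have "\<forall>k\<in>{..<N}. 0 \<le> \<alpha> k * h (z k) * h (z k)"
      using apos by (simp add: mult.assoc less_imp_le)
    then show ?thesis unfolding mu_inner_def by (intro sum_nonneg) blast
  qed
  have ipc: "\<alpha> i * (h (z i))\<^sup>2 \<le> ?ip h h" if "i < N" for h i
  proof -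
    have "\<alpha> i * h (z i) * h (z i) \<le> (\<Sum>j<N. \<alpha> j * h (z j) * h (z j))"
      by (rule member_le_sum) (use that apos in \<open>auto simp: mult.assoc less_imp_le\<close>)
    then show ?thesis by (simp add: mu_inner_def power2_eq_square mult.assoc)
  qed
  have c9: "\<forall>u :: nat \<Rightarrow> real \<Rightarrow> real. (\<forall>n. u n \<in> ?D) \<longrightarrow>
        (\<forall>\<epsilon>>0. \<exists>M. \<forall>n\<ge>M. \<forall>m\<ge>M.
            ?E (\<lambda>x. u n x - u m x) (\<lambda>x. u n x - u m x)
          + ?ip (\<lambda>x. u n x - u m x) (\<lambda>x. u n x - u m x) < \<epsilon>) \<longrightarrow>
        (\<exists>v\<in>?D. (\<lambda>n. ?E (\<lambda>x. u n x - v x) (\<lambda>x. u n x - v x)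
                    + ?ip (\<lambda>x. u n x - v x) (\<lambda>x. u n x - v x)) \<longlonglongrightarrow> 0)"
  proof (intro allI impI)
    fix u :: "nat \<Rightarrow> real \<Rightarrow> real"
    assume uD: "\<forall>n. u n \<in> ?D" and cau: "\<forall>\<epsilon>>0. \<exists>M. \<forall>n\<ge>M. \<forall>m\<ge>M.
            ?E (\<lambda>x. u n x - u m x) (\<lambda>x. u n x - u m x)
          + ?ip (\<lambda>x. u n x - u m x) (\<lambda>x. u n x - u m x) < \<epsilon>"
    have Ci: "Cauchy (\<lambda>n. u n (z i))" if i: "i < N" for i
      unfolding Cauchy_def
    proof (intro allI impI)
      fix e :: real assume e: "e > 0"
      have "\<alpha> i * e\<^sup>2 > 0" using apos[OF i] e by simp
      then obtain M where M: "\<forall>n\<ge>M. \<forall>m\<ge>M.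
            ?E (\<lambda>x. u n x - u m x) (\<lambda>x. u n x - u m x)
          + ?ip (\<lambda>x. u n x - u m x) (\<lambda>x. u n x - u m x) < \<alpha> i * e\<^sup>2" using cau by blast
      show "\<exists>M. \<forall>m\<ge>M. \<forall>n\<ge>M. dist (u m (z i)) (u n (z i)) < e"
      proof (intro exI allI impI)
        fix m n assume mn: "m \<ge> M" "n \<ge> M"
        let ?h = "\<lambda>x. u m x - u n x"
        have "0 \<le> ?E ?h ?h" using Enn cdiff uD by blast
        then have "\<alpha> i * (?h (z i))\<^sup>2 < \<alpha> i * e\<^sup>2" using M mn ipc[OF i, of ?h] by fastforce
        then have "(?h (z i))\<^sup>2 < e\<^sup>2" using apos[OF i] by simp
        then have "\<bar>?h (z i)\<bar> < e" using e by (metis power2_abs power2_less_imp_less less_imp_le)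
        then show "dist (u m (z i)) (u n (z i)) < e" by (simp add: dist_real_def)
      qed
    qed
    define c where "c i = lim (\<lambda>n. u n (z i))" for i
    have cl: "(\<lambda>n. u n (z i) - c i) \<longlonglongrightarrow> 0" if "i < N" for i
    proof -
      have "(\<lambda>n. u n (z i)) \<longlonglongrightarrow> c i"
        using Ci[OF that] unfolding c_def by (simp add: Cauchy_convergent_iff convergent_LIMSEQ_iff)
      then show ?thesis by (simp add: LIM_zero)
    qed
    let ?v = "stp c"
    have vD: "?v \<in> ?D" by (rule stp_D)
    have wD: "(\<lambda>x. u n x - ?v x) \<in> ?D" for n using cdiff uD vD by blast
    have dgw: "dg (\<lambda>x. u n x - ?v x) k = ((u n (z (nxt k)) - c (nxt k)) - (u n (z k) - c k)) / \<alpha> k"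
      if "k < N" for n k using that nxt_lt by (simp add: dg_def stp_z algebra_simps)
    have dgl: "(\<lambda>n. dg (\<lambda>x. u n x - ?v x) k) \<longlonglongrightarrow> 0" if k: "k < N" for k
    proof -
      have "(\<lambda>n. ((u n (z (nxt k)) - c (nxt k)) - (u n (z k) - c k)) / \<alpha> k) \<longlonglongrightarrow> (0 - 0) / \<alpha> k"
        by (intro tendsto_intros cl k nxt_lt) (use apos[OF k] in simp)
      then show ?thesis using dgw[OF k] by simp
    qed
    have "(\<lambda>n. (\<Sum>k<N. \<alpha> k * dg (\<lambda>x. u n x - ?v x) k * dg (\<lambda>x. u n x - ?v x) k)
        + (\<Sum>i<N. \<alpha> i * (u n (z i) - c i) * (u n (z i) - c i))) \<longlonglongrightarrow> 0 + 0"
    proof (intro tendsto_add tendsto_null_sum)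
      fix k assume "k \<in> {..<N}"
      then have k: "k < N" by simp
      have "(\<lambda>n. \<alpha> k * dg (\<lambda>x. u n x - ?v x) k * dg (\<lambda>x. u n x - ?v x) k) \<longlonglongrightarrow> \<alpha> k * 0 * 0"
        by (intro tendsto_intros dgl k)
      then show "(\<lambda>n. \<alpha> k * dg (\<lambda>x. u n x - ?v x) k * dg (\<lambda>x. u n x - ?v x) k) \<longlonglongrightarrow> 0" by simp
    next
      fix i assume "i \<in> {..<N}"
      then have i: "i < N" by simp
      have "(\<lambda>n. \<alpha> i * (u n (z i) - c i) * (u n (z i) - c i)) \<longlonglongrightarrow> \<alpha> i * 0 * 0"
        by (intro tendsto_intros cl i)
      then show "(\<lambda>n. \<alpha> i * (u n (z i) - c i) * (u n (z i) - c i)) \<longlonglongrightarrow> 0" by simp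
    qed
    moreover have "?E (\<lambda>x. u n x - ?v x) (\<lambda>x. u n x - ?v x) + ?ip (\<lambda>x. u n x - ?v x) (\<lambda>x. u n x - ?v x)
        = (\<Sum>k<N. \<alpha> k * dg (\<lambda>x. u n x - ?v x) k * dg (\<lambda>x. u n x - ?v x) k)
        + (\<Sum>i<N. \<alpha> i * (u n (z i) - c i) * (u n (z i) - c i))" for n
      using wD[of n] by (simp add: energy mu_inner_def stp_z)
    ultimately show "\<exists>v\<in>?D. (\<lambda>n. ?E (\<lambda>x. u n x - v x) (\<lambda>x. u n x - v x)
                    + ?ip (\<lambda>x. u n x - v x) (\<lambda>x. u n x - v x)) \<longlonglongrightarrow> 0"
      using vD by (intro bexI[of _ ?v]) simp_all
  qed
  have c10: "\<forall>f\<in>?D. (\<lambda>x. min (max (f x) 0) 1) \<in> ?D \<and>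
        ?E (\<lambda>x. min (max (f x) 0) 1) (\<lambda>x. min (max (f x) 0) 1) \<le> ?E f f"
  proof
    fix f assume fD: "f \<in> ?D"
    let ?F = "\<lambda>x. min (max (f x) 0) 1"
    have FD: "?F \<in> ?D" using fD using inD step_comp2[where h="\<lambda>a b. min (max a 0) 1"] by blast
    have "\<alpha> k * dg ?F k * dg ?F k \<le> \<alpha> k * dg f k * dg f k" if k: "k < N" for k
    proof -
      have "\<bar>dg ?F k\<bar> \<le> \<bar>dg f k\<bar>"
        using apos[OF k] clamp_lip by (simp add: dg_def abs_divide divide_right_mono)
      then have "dg ?F k * dg ?F k \<le> dg f k * dg f k" by (rule sq_mono_abs)
      then show ?thesis using apos[OF k] by (simp add: mult.assoc)
    qed
    then have "?E ?F ?F \<le> ?E f f" using FD fD by (simp add: energy) (intro sum_mono, simp)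
    then show "?F \<in> ?D \<and> ?E ?F ?F \<le> ?E f f" using FD by simp
  qed
  show ?thesis unfolding dirichlet_form_def
    using c1 c2 c3 c4 c5 c6 c7 c8 Enn c9 c10 by blast
qed

end
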